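(* Let $n,m\ge1$. For each $i\in[n]$ let $d_i$ be a positive integer and $p_{i0}<p_{i1}<\cdots<p_{id_i}$ reals, and let $\mathcal{X}=\prod_{i\in[n]}\{p_{i0},\dots,p_{id_i}\}$. Let $P=\{\boldsymbol{x}\in\mathbb{R}^n: A\boldsymbol{x}\ge \boldsymbol{h}\}$ be a polytope. For each $t\in[m]$ and $i\in[n]$ let $f^t_i:\{p_{i0},\dots,p_{id_i}\}\to[L^t_i,U^t_i]$ and let $\phi^t:\prod_{i\in[n]}[L^t_i,U^t_i]\to\mathbb{R}$ be arbitrary. Define the lifted affine functions $\ell^t_i(\boldsymbol{z}_i)=f^t_i(p_{i0})+\sum_{j\in[d_i]}(f^t_i(p_{ij})-f^t_i(p_{i,j-1}))z_{ij}$ and the finite set $$G=\bigl\{(\boldsymbol{z},\boldsymbol{\mu})\in\operatorname{vert}(\Delta)\times\mathbb{R}^m:\ \mu^t=\phi^t(\ell^t_1(\boldsymbol{z}_1),\dots,\ell^t_n(\boldsymbol{z}_n))\ \forall t\in[m]\bigr\}.$$ Let $E=\{(\boldsymbol{x},\boldsymbol{z},\boldsymbol{\mu}): (\boldsymbol{z},\boldsymbol{\mu})\in\operatorname{conv}(G),\ \boldsymbol{x}\in P,\ \boldsymbol{z}\in\{0,1\}^{\sum_i d_i},\ (x_i,\boldsymbol{z}_i)\in B_i\ \forall i\in[n]\}$. Then $E$ is an MIP formulation of the graph $\{(\boldsymbol{x},\boldsymbol{\mu}):\boldsymbol{x}\in P\cap\mathcal{X},\ \mu^t=\phi^t(f^t_1(x_1),\dots,f^t_n(x_n))\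 \forall t\in[m]\}$. Moreover, when the polyhedral constraint is absent (i.e. $P$ is replaced by $\mathbb{R}^n$), this formulation is ideal.
   Context: $[n]=\{1,\dots,n\}$. For a positive integer $d$, $\Delta^d=\{\boldsymbol{z}\in\mathbb{R}^d:1\ge z_1\ge z_2\ge\cdots\ge z_d\ge0\}$; $\Delta=\Delta^{d_1}\times\cdots\times\Delta^{d_n}$ with $\boldsymbol{z}=(\boldsymbol{z}_1,\dots,\boldsymbol{z}_n)$, $\boldsymbol{z}_i=(z_{i1},\dots,z_{id_i})$; its vertex set is $\operatorname{vert}(\Delta)=\Delta\cap\{0,1\}^{\sum_i d_i}$. The unary binarization polytope is $B_i=\{(x_i,\boldsymbol{z}_i): x_i=p_{i0}+\sum_{j\in[d_i]}(p_{ij}-p_{i,j-1})z_{ij},\ \boldsymbol{z}_i\in\Delta^{d_i}\}$. An MIP formulation of a set $S$ is a set $E=\{(\boldsymbol{x},\boldsymbol{y},\boldsymbol{z})\in Q:\boldsymbol{z}\text{ binary}\}$, $Q$ a polyhedron, whose projection onto the original variables equals $S$; it is ideal if every vertex of its LP relaxation $Q$ (obtained by dropping the binary requirement) has binary $\boldsymbol{z}$. *)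

theory Defs
  imports "HOL-Analysis.Analysis" "HOL-Library.Function_Algebras"
begin

text \<open>Real vector space structure on functions (pointwise), so that the library notions
  convex hull and extreme_point_of can be used on points idx => real.\<close>

instantiation "fun" :: (type, real_vector) real_vector
begin
definition scaleR_fun :: "real \<Rightarrow> ('a \<Rightarrow> 'b) \<Rightarrow> 'a \<Rightarrow> 'b" where
  "scaleR_fun r g = (\<lambda>x. r *\<^sub>R g x)"
instance
  by standard (auto simp: scaleR_fun_def fun_eq_iff algebra_simps)
end

text \<open>Coordinates of the lifted space: x_i, z_ij, mu^t.\<close>
datatype idx = Xc nat | Zc nat nat | Mc nat

type_synonym pt = "idx \<Rightarrow> real"

definition coordsZ :: "nat \<Rightarrow> (nat \<Rightarrow> nat) \<Rightarrow> idx set" where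
  "coordsZ n d = {Zc i j | i j. i \<in> {1..n} \<and> j \<in> {1..d i}}"

definition coordsZM :: "nat \<Rightarrow> nat \<Rightarrow> (nat \<Rightarrow> nat) \<Rightarrow> idx set" where
  "coordsZM n m d = coordsZ n d \<union> {Mc t | t. t \<in> {1..m}}"

definition coords :: "nat \<Rightarrow> nat \<Rightarrow> (nat \<Rightarrow> nat) \<Rightarrow> idx set" where
  "coords n m d = {Xc i | i. i \<in> {1..n}} \<union> coordsZM n m d"

text \<open>A point of R^I, for a finite coordinate set I, is a function vanishing outside I.\<close>
definition supp_in :: "idx set \<Rightarrow> pt \<Rightarrow> bool" where
  "supp_in I v \<longleftrightarrow> (\<forall>k. k \<notin> I \<longrightarrow> v k = 0)"

definition polyhedron_on :: "idx set \<Rightarrow> pt set \<Rightarrow> bool" where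
  "polyhedron_on I Q \<longleftrightarrow> (\<exists>F :: ((idx \<Rightarrow> real) \<times> real) set. finite F \<and>
     Q = {v. supp_in I v \<and> (\<forall>(a,b)\<in>F. (\<Sum>k\<in>I. a k * v k) \<le> b)})"

definition Rn :: "nat \<Rightarrow> (nat \<Rightarrow> real) set" where
  "Rn n = {x. \<forall>i. i \<notin> {1..n} \<longrightarrow> x i = 0}"

definition Pset :: "nat \<Rightarrow> nat \<Rightarrow> (nat \<Rightarrow> nat \<Rightarrow> real) \<Rightarrow> (nat \<Rightarrow> real) \<Rightarrow> (nat \<Rightarrow> real) set" where
  "Pset n r A h = {x \<in> Rn n. \<forall>k<r. (\<Sum>i=1..n. A k i * x i) \<ge> h k}"

definition Xgrid :: "nat \<Rightarrow> (nat \<Rightarrow> nat) \<Rightarrow> (nat \<Rightarrow> nat \<Rightarrow> real) \<Rightarrow> (nat \<Rightarrow> real) set" where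
  "Xgrid n d p = {x \<in> Rn n. \<forall>i\<in>{1..n}. x i \<in> p i ` {0..d i}}"

definition graph_set :: "nat \<Rightarrow> nat \<Rightarrow> (nat \<Rightarrow> nat) \<Rightarrow> (nat \<Rightarrow> nat \<Rightarrow> real) \<Rightarrow> (nat \<Rightarrow> real) set
    \<Rightarrow> (nat \<Rightarrow> nat \<Rightarrow> real \<Rightarrow> real) \<Rightarrow> (nat \<Rightarrow> (nat \<Rightarrow> real) \<Rightarrow> real)
    \<Rightarrow> ((nat \<Rightarrow> real) \<times> (nat \<Rightarrow> real)) set" where
  "graph_set n m d p P f \<phi> = {(x, \<mu>). x \<in> P \<inter> Xgrid n d p \<and> \<mu> \<in> Rn m \<and>
     (\<forall>t\<in>{1..m}. \<mu> t = \<phi> t (\<lambda>i. if i \<in> {1..n} then f t i (x i) else 0))}"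

definition in_Delta_i :: "(nat \<Rightarrow> nat) \<Rightarrow> nat \<Rightarrow> pt \<Rightarrow> bool" where
  "in_Delta_i d i v \<longleftrightarrow> v (Zc i 1) \<le> 1 \<and> (\<forall>j. 1 \<le> j \<and> j < d i \<longrightarrow> v (Zc i (Suc j)) \<le> v (Zc i j))
      \<and> v (Zc i (d i)) \<ge> 0"

definition in_Delta :: "nat \<Rightarrow> (nat \<Rightarrow> nat) \<Rightarrow> pt \<Rightarrow> bool" where
  "in_Delta n d v \<longleftrightarrow> (\<forall>i\<in>{1..n}. in_Delta_i d i v)"

definition z_binary :: "nat \<Rightarrow> (nat \<Rightarrow> nat) \<Rightarrow> pt \<Rightarrow> bool" where
  "z_binary n d v \<longleftrightarrow> (\<forall>k\<in>coordsZ n d. v k \<in> {0,1})"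

definition in_B :: "(nat \<Rightarrow> nat) \<Rightarrow> (nat \<Rightarrow> nat \<Rightarrow> real) \<Rightarrow> nat \<Rightarrow> pt \<Rightarrow> bool" where
  "in_B d p i v \<longleftrightarrow> v (Xc i) = p i 0 + (\<Sum>j=1..d i. (p i j - p i (j - 1)) * v (Zc i j))
      \<and> in_Delta_i d i v"

definition ell :: "(nat \<Rightarrow> nat) \<Rightarrow> (nat \<Rightarrow> nat \<Rightarrow> real) \<Rightarrow> (nat \<Rightarrow> nat \<Rightarrow> real \<Rightarrow> real)
    \<Rightarrow> nat \<Rightarrow> nat \<Rightarrow> pt \<Rightarrow> real" where
  "ell d p f t i v = f t i (p i 0) + (\<Sum>j=1..d i. (f t i (p i j) - f t i (p i (j - 1))) * v (Zc i j))"

definition G_set :: "nat \<Rightarrow> nat \<Rightarrow> (nat \<Rightarrow> nat) \<Rightarrow> (nat \<Rightarrow> nat \<Rightarrow> real)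
    \<Rightarrow> (nat \<Rightarrow> nat \<Rightarrow> real \<Rightarrow> real) \<Rightarrow> (nat \<Rightarrow> (nat \<Rightarrow> real) \<Rightarrow> real) \<Rightarrow> pt set" where
  "G_set n m d p f \<phi> = {v. supp_in (coordsZM n m d) v \<and> in_Delta n d v \<and> z_binary n d v \<and>
     (\<forall>t\<in>{1..m}. v (Mc t) = \<phi> t (\<lambda>i. if i \<in> {1..n} then ell d p f t i v else 0))}"

definition zmu_part :: "pt \<Rightarrow> pt" where
  "zmu_part v = (\<lambda>k. case k of Xc _ \<Rightarrow> 0 | _ \<Rightarrow> v k)"

definition x_part :: "pt \<Rightarrow> nat \<Rightarrow> real" where
  "x_part v = (\<lambda>i. v (Xc i))"

definition mu_part :: "pt \<Rightarrow> nat \<Rightarrow> real" where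
  "mu_part v = (\<lambda>t. v (Mc t))"

definition Q_set :: "nat \<Rightarrow> nat \<Rightarrow> (nat \<Rightarrow> nat) \<Rightarrow> (nat \<Rightarrow> nat \<Rightarrow> real) \<Rightarrow> (nat \<Rightarrow> real) set
    \<Rightarrow> (nat \<Rightarrow> nat \<Rightarrow> real \<Rightarrow> real) \<Rightarrow> (nat \<Rightarrow> (nat \<Rightarrow> real) \<Rightarrow> real) \<Rightarrow> pt set" where
  "Q_set n m d p P f \<phi> = {v. supp_in (coords n m d) v \<and> zmu_part v \<in> convex hull (G_set n m d p f \<phi>)
     \<and> x_part v \<in> P \<and> (\<forall>i\<in>{1..n}. in_B d p i v)}"

definition mip_formulation :: "idx set \<Rightarrow> idx set \<Rightarrow> (pt \<Rightarrow> 'a) \<Rightarrow> pt set \<Rightarrow> 'a set \<Rightarrow> bool" where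
  "mip_formulation I Zs pr Q S \<longleftrightarrow> polyhedron_on I Q \<and>
     pr ` {v \<in> Q. \<forall>k\<in>Zs. v k \<in> {0,1}} = S"

definition ideal_formulation :: "idx set \<Rightarrow> idx set \<Rightarrow> (pt \<Rightarrow> 'a) \<Rightarrow> pt set \<Rightarrow> 'a set \<Rightarrow> bool" where
  "ideal_formulation I Zs pr Q S \<longleftrightarrow> mip_formulation I Zs pr Q S \<and>
     (\<forall>v. v extreme_point_of Q \<longrightarrow> (\<forall>k\<in>Zs. v k \<in> {0,1}))"

end

theory Submission
  imports Defs
begin

definition lin :: "idx set \<Rightarrow> pt \<Rightarrow> pt \<Rightarrow> real" where
  "lin I c v = (\<Sum>k\<in>I. c k * v k)"

definition dlt :: "idx \<Rightarrow> pt" where "dlt k0 = (\<lambda>k. if k = k0 then 1 else 0)"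

lemma scaleR_fun_apply[simp]: "(r *\<^sub>R g) x = r *\<^sub>R g x"
  by (simp add: scaleR_fun_def)

lemma sum_fun_apply: "(sum g S) k = (\<Sum>x\<in>S. g x k)"
  by (induction S rule: infinite_finite_induct) auto

lemma lin_dlt[simp]: "lin I (dlt k0) v = v k0" if "finite I" "k0 \<in> I"
proof -
  have "lin I (dlt k0) v = (\<Sum>k\<in>I. if k = k0 then v k else 0)"
    unfolding lin_def dlt_def by (rule sum.cong) auto
  also have "\<dots> = v k0" using that by (simp add: sum.delta)
  finally show ?thesis .
qed

lemma lin_diff[simp]: "lin I (c1 - c2) v = lin I c1 v - lin I c2 v"
  by (simp add: lin_def algebra_simps sum_subtractf)

lemma lin_uminus[simp]: "lin I (- c) v = - lin I c v"
  by (simp add: lin_def sum_negf)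

lemma lin_zero[simp]: "lin I 0 v = 0"
  by (simp add: lin_def)

lemma lin_comb: "lin I c (u *\<^sub>R x + w *\<^sub>R y) = u * lin I c x + w * lin I c y"
  by (simp add: lin_def algebra_simps sum.distrib sum_distrib_left)

lemma lin_comb2: "lin I (\<lambda>k. u * c1 k + w * c2 k) x = u * lin I c1 x + w * lin I c2 x"
  by (simp add: lin_def algebra_simps sum.distrib sum_distrib_left)

lemma lin_vec_diff: "lin I c (x - y) = lin I c x - lin I c y"
  by (simp add: lin_def algebra_simps sum_subtractf)

lemma lin_vec_scale: "lin I c (u *\<^sub>R x) = u * lin I c x"
  by (simp add: lin_def algebra_simps sum_distrib_left)

lemma lin_vec_add: "lin I c (x + y) = lin I c x + lin I c y"
  by (simp add: lin_def algebra_simps sum.distrib)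

lemma poly_alt: "polyhedron_on I Q \<longleftrightarrow>
   (\<exists>F. finite F \<and> Q = {v. supp_in I v \<and> (\<forall>(a,b)\<in>F. lin I a v \<le> b)})"
  by (simp add: polyhedron_on_def lin_def)

lemma fm_elim:
  assumes "finite H"
  shows "\<exists>F. finite F \<and> (\<forall>x. (\<exists>t::real. \<forall>(c,e,b)\<in>H. lin I c x + t*e \<le> b) \<longleftrightarrow>
            (\<forall>(c,b)\<in>F. lin I c x \<le> b))"
proof -
  define F0 where "F0 = {(c,b). (c,0::real,b)\<in>H}"
  define Hp where "Hp = {h\<in>H. fst (snd h) > 0}"
  define Hn where "Hn = {h\<in>H. fst (snd h) < 0}"
  define comb where "comb = (\<lambda>((c1::pt,e1::real,b1::real),(c2::pt,e2::real,b2::real)).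
      ((\<lambda>k. (-e2)*c1 k + e1 * c2 k), (-e2)*b1 + e1*b2))"
  define F where "F = F0 \<union> comb ` (Hp \<times> Hn)"
  have fF0: "finite F0"
  proof -
    have "F0 \<subseteq> (\<lambda>(c,e,b). (c,b)) ` H" unfolding F0_def by force
    then show ?thesis using assms finite_subset by blast
  qed
  have "finite F" unfolding F_def Hp_def Hn_def using fF0 assms by auto
  moreover have "(\<exists>t::real. \<forall>(c,e,b)\<in>H. lin I c x + t*e \<le> b) \<longleftrightarrow>
            (\<forall>(c,b)\<in>F. lin I c x \<le> b)" for x
  proof
    assume "\<exists>t::real. \<forall>(c,e,b)\<in>H. lin I c x + t*e \<le> b"
    then obtain t where t: "\<And>c e b. (c,e,b)\<in>H \<Longrightarrow> lin I c x + t*e \<le> b" by fast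
    show "\<forall>(c,b)\<in>F. lin I c x \<le> b"
    proof (clarify)
      fix c b assume "(c,b) \<in> F"
      then have "(c,b) \<in> F0 \<union> comb ` (Hp \<times> Hn)" by (simp add: F_def)
      then show "lin I c x \<le> b"
      proof
        assume "(c,b) \<in> F0" then show ?thesis using t[of c 0 b] by (simp add: F0_def)
      next
        assume "(c,b) \<in> comb ` (Hp \<times> Hn)"
        then obtain c1 e1 b1 c2 e2 b2 where h1: "(c1,e1,b1)\<in>H" "e1 > 0" and h2: "(c2,e2,b2)\<in>H" "e2 < 0"
          and cb: "(c,b) = comb ((c1,e1,b1),(c2,e2,b2))"
          unfolding Hp_def Hn_def by force
        have i1: "lin I c1 x + t*e1 \<le> b1" using t h1 by blast
        have i2: "lin I c2 x + t*e2 \<le> b2" using t h2 by blast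
        have "(-e2) * (lin I c1 x + t*e1) \<le> (-e2) * b1" using i1 h2 by (intro mult_left_mono) auto
        moreover have "e1 * (lin I c2 x + t*e2) \<le> e1 * b2" using i2 h1 by (intro mult_left_mono) auto
        ultimately have "(-e2) * lin I c1 x + e1 * lin I c2 x \<le> (-e2)*b1 + e1*b2"
          by (simp add: algebra_simps)
        moreover have "c = (\<lambda>k. (-e2)*c1 k + e1*c2 k) \<and> b = (-e2)*b1 + e1*b2"
          using cb unfolding comb_def by simp
        ultimately show ?thesis using lin_comb2[of I "-e2" c1 e1 c2 x] by simp
      qed
    qed
  next
    assume F: "\<forall>(c,b)\<in>F. lin I c x \<le> b"
    define up where "up = (\<lambda>(c,e,b). (b - lin I c x)/e) ` Hp"
    define lo where "lo = (\<lambda>(c,e,b). (b - lin I c x)/e) ` Hn"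
    have fin: "finite up" "finite lo" unfolding up_def lo_def Hp_def Hn_def using assms by auto
    have lu: "l \<le> u" if lu1: "l \<in> lo" and lu2: "u \<in> up" for l u
    proof -
      obtain c1 e1 b1 where h1: "(c1,e1,b1)\<in>Hp" and u: "u = (b1 - lin I c1 x)/e1" using lu2 up_def by auto
      obtain c2 e2 b2 where h2: "(c2,e2,b2)\<in>Hn" and l: "l = (b2 - lin I c2 x)/e2" using lu1 lo_def by auto
      have e: "e1 > 0" "e2 < 0" using h1 h2 by (auto simp: Hp_def Hn_def)
      have "comb ((c1,e1,b1),(c2,e2,b2)) \<in> F" using h1 h2 unfolding F_def by blast
      then have "(-e2) * lin I c1 x + e1 * lin I c2 x \<le> (-e2)*b1 + e1*b2"
        using F lin_comb2[of I "-e2" c1 e1 c2 x] by (auto simp: comb_def)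
      then have "(b2 - lin I c2 x) * e1 \<ge> (b1 - lin I c1 x) * e2" by (simp add: algebra_simps)
      then show ?thesis unfolding l u using e
        by (simp add: divide_simps)
    qed
    define t where "t = (if lo = {} then (if up = {} then 0 else Min up) else Max lo)"
    have "\<forall>(c,e,b)\<in>H. lin I c x + t*e \<le> b"
    proof (clarify)
      fix c e b assume h: "(c,e,b)\<in>H"
      consider "e = 0" | "e > 0" | "e < 0" by linarith
      then show "lin I c x + t*e \<le> b"
      proof cases
        case 1 then have "(c,b)\<in>F" using h by (auto simp: F_def F0_def)
        then show ?thesis using F 1 by auto
      next
        case 2
        then have uu: "(b - lin I c x)/e \<in> up" using h unfolding up_def Hp_def by force
        have "t \<le> (b - lin I c x)/e"
        proof (cases "lo = {}")
          case True then show ?thesis using uu fin by (auto simp: t_def)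
        next
          case False then show ?thesis using uu fin lu by (auto simp: t_def)
        qed
        then show ?thesis using 2 by (simp add: pos_le_divide_eq algebra_simps)
      next
        case 3
        then have ll: "(b - lin I c x)/e \<in> lo" using h unfolding lo_def Hn_def by force
        then have "t \<ge> (b - lin I c x)/e" using fin by (auto simp: t_def)
        then show ?thesis using 3 by (simp add: neg_divide_le_eq algebra_simps)
      qed
    qed
    then show "\<exists>t::real. \<forall>(c,e,b)\<in>H. lin I c x + t*e \<le> b" by blast
  qed
  ultimately show ?thesis by blast
qed

lemma supp_comb: "supp_in I x \<Longrightarrow> supp_in I y \<Longrightarrow> supp_in I (u *\<^sub>R x + w *\<^sub>R y)"
  by (simp add: supp_in_def)

lemma bounded_dir:
  fixes alpha w M :: real
  assumes "\<forall>s\<ge>0. alpha + s*w \<le> M"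
  shows "w \<le> 0"
proof (rule ccontr)
  assume "\<not> w \<le> 0"
  then have w: "w > 0" by simp
  define s where "s = (\<bar>M - alpha\<bar> + 1)/w"
  have "s \<ge> 0" using w by (simp add: s_def)
  then have "alpha + s*w \<le> M" using assms by blast
  moreover have "s*w = \<bar>M - alpha\<bar> + 1" using w by (simp add: s_def)
  ultimately show False by linarith
qed

lemma hull_coord_le:
  assumes "finite S" "S \<noteq> {}"
  shows "convex hull S \<subseteq> {z::pt. z k \<le> Max ((\<lambda>s. s k) ` S)}"
proof (rule hull_minimal)
  show "S \<subseteq> {z::pt. z k \<le> Max ((\<lambda>s. s k) ` S)}" using assms by auto
  show "convex {z::pt. z k \<le> Max ((\<lambda>s. s k) ` S)}"
    unfolding convex_def by (auto intro: convex_bound_le)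
qed

lemma convex_bound_ge':
  fixes x y a u v :: real
  assumes "a \<le> x" "a \<le> y" "0 \<le> u" "0 \<le> v" "u + v = 1"
  shows "a \<le> u * x + v * y"
  using convex_bound_le[of "-x" "-a" "-y" u v] assms by (simp add: algebra_simps)

lemma hull_coord_ge:
  assumes "finite S" "S \<noteq> {}"
  shows "convex hull S \<subseteq> {z::pt. z k \<ge> Min ((\<lambda>s. s k) ` S)}"
proof (rule hull_minimal)
  show "S \<subseteq> {z::pt. z k \<ge> Min ((\<lambda>s. s k) ` S)}" using assms by auto
  show "convex {z::pt. z k \<ge> Min ((\<lambda>s. s k) ` S)}"
    unfolding convex_def by (auto intro: convex_bound_ge')
qed

lemma conv_poly:
  assumes "finite I" "finite S" "\<forall>s\<in>S. supp_in I s"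
  shows "\<exists>F. finite F \<and> convex hull S = {v. supp_in I v \<and> (\<forall>(c,b)\<in>F. lin I c v \<le> b)}"
  using assms(2,3)
proof (induction S rule: finite_induct)
  case empty
  show ?case by (rule exI[of _ "{(0,-1)}"]) auto
next
  case (insert a S)
  have suppa: "supp_in I a" using insert by auto
  show ?case
  proof (cases "S = {}")
    case True
    define F where "F = (\<lambda>k. (dlt k, a k)) ` I \<union> (\<lambda>k. (- dlt k, - a k)) ` I"
    have "finite F" using assms(1) by (simp add: F_def)
    moreover have e1: "{a} = {v. supp_in I v \<and> (\<forall>(c,b)\<in>F. lin I c v \<le> b)}"
    proof (intro set_eqI iffI)
      fix v assume "v \<in> {a}" then show "v \<in> {v. supp_in I v \<and> (\<forall>(c,b)\<in>F. lin I c v \<le> b)}"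
        using suppa assms(1) by (auto simp: F_def)
    next
      fix v assume v: "v \<in> {v. supp_in I v \<and> (\<forall>(c,b)\<in>F. lin I c v \<le> b)}"
      have "v k = a k" for k
      proof (cases "k \<in> I")
        case True
        then have "(dlt k, a k) \<in> F" "(- dlt k, - a k) \<in> F" by (auto simp: F_def)
        then have "v k \<le> a k" "- v k \<le> - a k" using v True assms(1) by fastforce+
        then show ?thesis by simp
      next
        case False then show ?thesis using v suppa by (simp add: supp_in_def)
      qed
      then show "v \<in> {a}" by auto
    qed
    moreover have e2: "convex hull (insert a S) = {a}" using True by simp
    ultimately show ?thesis using trans[OF e2 e1] by blast
  next
    case False
    obtain F where fF: "finite F" and hS: "convex hull S = {v. supp_in I v \<and> (\<forall>(c,b)\<in>F. lin I c v \<le> b)}"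
      using insert by auto
    define H where "H = (\<lambda>(c,b). (c, b - lin I c a, b)) ` F \<union> {(0,-1,0),(0,1,1)}"
    have fH: "finite H" using fF by (simp add: H_def)
    obtain F' where fF': "finite F'" and F': "\<And>x. (\<exists>t::real. \<forall>(c,e,b)\<in>H. lin I c x + t*e \<le> b) \<longleftrightarrow>
            (\<forall>(c,b)\<in>F'. lin I c x \<le> b)" using fm_elim[OF fH, of I] by blast
    have Hiff: "(\<forall>(c,e,b)\<in>H. lin I c x + t*e \<le> b) \<longleftrightarrow>
        (0 \<le> t \<and> t \<le> 1 \<and> (\<forall>(c,b)\<in>F. lin I c x + t*(b - lin I c a) \<le> b))" for x t
      unfolding H_def ball_Un by (auto simp: ball_simps)
    have hull: "convex hull (insert a S) = {v. supp_in I v \<and> (\<exists>t. 0 \<le> t \<and> t \<le> 1 \<and>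
          (\<forall>(c,b)\<in>F. lin I c v + t*(b - lin I c a) \<le> b))}"
    proof (intro set_eqI iffI)
      fix x assume "x \<in> convex hull (insert a S)"
      then obtain u w y where uw: "u \<ge> 0" "w \<ge> 0" "u + w = 1" and y: "y \<in> convex hull S"
        and x: "x = u *\<^sub>R a + w *\<^sub>R y"
        using convex_hull_insert[OF False] by auto
      have ys: "supp_in I y" and yF: "\<And>c b. (c,b)\<in>F \<Longrightarrow> lin I c y \<le> b" using y hS by auto
      have "supp_in I x" using x supp_comb[OF suppa ys] by simp
      moreover have "lin I c x + u*(b - lin I c a) \<le> b" if "(c,b)\<in>F" for c b
      proof -
        have "lin I c x + u*(b - lin I c a) = w * lin I c y + u * b"
          using x by (simp add: lin_comb algebra_simps)
        also have "\<dots> \<le> w * b + u * b" using yF[OF that] uw by (simp add: mult_left_mono)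
        also have "\<dots> = (u + w) * b" by (simp add: algebra_simps)
        also have "\<dots> = b" using uw by simp
        finally show ?thesis .
      qed
      ultimately show "x \<in> {v. supp_in I v \<and> (\<exists>t. 0 \<le> t \<and> t \<le> 1 \<and>
          (\<forall>(c,b)\<in>F. lin I c v + t*(b - lin I c a) \<le> b))}" using uw by auto
    next
      fix x assume "x \<in> {v. supp_in I v \<and> (\<exists>t. 0 \<le> t \<and> t \<le> 1 \<and>
          (\<forall>(c,b)\<in>F. lin I c v + t*(b - lin I c a) \<le> b))}"
      then obtain t where xs: "supp_in I x" and t: "0 \<le> t" "t \<le> 1"
        and tF: "\<And>c b. (c,b)\<in>F \<Longrightarrow> lin I c x + t*(b - lin I c a) \<le> b" by blast
      have fS: "finite S" using insert by simp
      show "x \<in> convex hull (insert a S)"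
      proof (cases "t = 1")
        case True
        obtain y0 where y0: "y0 \<in> S" using False by blast
        then have y0h: "y0 \<in> convex hull S" by (simp add: hull_inc)
        have inS: "y0 + s *\<^sub>R (x - a) \<in> convex hull S" if "s \<ge> 0" for s
        proof -
          have "supp_in I (y0 + s *\<^sub>R (x - a))" using xs suppa y0h hS by (auto simp: supp_in_def)
          moreover have "lin I c (y0 + s *\<^sub>R (x - a)) \<le> b" if cb: "(c,b)\<in>F" for c b
          proof -
            have "lin I c x - lin I c a \<le> 0" using tF[OF cb] True by simp
            then have "s * (lin I c x - lin I c a) \<le> 0" using \<open>s \<ge> 0\<close> by (simp add: mult_nonneg_nonpos)
            moreover have "lin I c y0 \<le> b" using y0h hS cb by auto
            ultimately show ?thesis by (simp add: lin_vec_add lin_vec_scale lin_vec_diff)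
          qed
          ultimately show ?thesis using hS by auto
        qed
        have "x k = a k" for k
        proof -
          have "\<forall>s\<ge>0. y0 k + s * (x k - a k) \<le> Max ((\<lambda>s. s k) ` S)"
            using inS hull_coord_le[OF fS False, of k] by fastforce
          then have 1: "x k - a k \<le> 0" by (rule bounded_dir)
          have "\<forall>s\<ge>0. (- y0 k) + s * (- (x k - a k)) \<le> - Min ((\<lambda>s. s k) ` S)"
          proof (intro allI impI)
            fix s :: real assume "s \<ge> 0"
            then have "y0 + s *\<^sub>R (x - a) \<in> {z. Min ((\<lambda>s. s k) ` S) \<le> z k}"
              using inS hull_coord_ge[OF fS False, of k] by blast
            then show "(- y0 k) + s * (- (x k - a k)) \<le> - Min ((\<lambda>s. s k) ` S)" by (simp add: algebra_simps)
          qed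
          then have 2: "- (x k - a k) \<le> 0" by (rule bounded_dir)
          from 1 2 show ?thesis by simp
        qed
        then have "x = a" by auto
        then show ?thesis by (simp add: hull_inc)
      next
        case False2: False
        then have t1: "t < 1" using t by simp
        define y where "y = (1/(1-t)) *\<^sub>R (x - t *\<^sub>R a)"
        have "supp_in I y" using xs suppa by (auto simp: supp_in_def y_def)
        moreover have "lin I c y \<le> b" if cb: "(c,b)\<in>F" for c b
        proof -
          have "lin I c y = (lin I c x - t * lin I c a) / (1 - t)"
            by (simp add: y_def lin_vec_scale lin_vec_diff)
          also have "\<dots> \<le> b" using tF[OF cb] t1 by (simp add: divide_simps algebra_simps)
          finally show ?thesis .
        qed
        ultimately have yh: "y \<in> convex hull S" using hS by auto
        have "x = t *\<^sub>R a + (1 - t) *\<^sub>R y" using t1 by (auto simp: y_def)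
        moreover have "\<exists>u\<ge>0. \<exists>v\<ge>0. \<exists>b. (u + v = 1) \<and> b \<in> (convex hull S) \<and> (x = u *\<^sub>R a + v *\<^sub>R b)"
        proof -
          have f: "0 \<le> 1 - t" "t + (1-t) = 1" using t1 by auto
          show ?thesis using calculation yh t f by blast
        qed
        ultimately show ?thesis using convex_hull_insert[OF False] by blast
      qed
    qed
    have "convex hull (insert a S) = {v. supp_in I v \<and> (\<forall>(c,b)\<in>F'. lin I c v \<le> b)}"
      unfolding hull using F' Hiff by auto
    then show ?thesis using fF' by blast
  qed
qed

lemma poly_Int: "polyhedron_on I A \<Longrightarrow> polyhedron_on I B \<Longrightarrow> polyhedron_on I (A \<inter> B)"
  unfolding poly_alt
proof (elim exE conjE)
  fix F1 F2 assume "finite F1" "A = {v. supp_in I v \<and> (\<forall>(a, b)\<in>F1. lin I a v \<le> b)}"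
    "finite F2" "B = {v. supp_in I v \<and> (\<forall>(a, b)\<in>F2. lin I a v \<le> b)}"
  then show "\<exists>F. finite F \<and> A \<inter> B = {v. supp_in I v \<and> (\<forall>(a, b)\<in>F. lin I a v \<le> b)}"
    by (intro exI[of _ "F1 \<union> F2"]) auto
qed

lemma poly_half: "polyhedron_on I {v. supp_in I v \<and> lin I c v \<le> b}"
  unfolding poly_alt by (intro exI[of _ "{(c,b)}"]) auto

lemma poly_supp: "polyhedron_on I {v. supp_in I v}"
  unfolding poly_alt by (intro exI[of _ "{}"]) auto

lemma poly_INT: "finite J \<Longrightarrow> (\<And>j. j \<in> J \<Longrightarrow> polyhedron_on I (Q j)) \<Longrightarrow>
   polyhedron_on I ({v. supp_in I v} \<inter> (\<Inter>j\<in>J. Q j))"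
proof (induction J rule: finite_induct)
  case empty then show ?case by (simp add: poly_supp)
next
  case (insert x F)
  have "{v. supp_in I v} \<inter> (\<Inter>j\<in>insert x F. Q j) = Q x \<inter> ({v. supp_in I v} \<inter> (\<Inter>j\<in>F. Q j))" by auto
  then show ?case using insert poly_Int by simp
qed


lemma mem_coordsZ[simp]:
  "Zc i j \<in> coordsZ n d \<longleftrightarrow> i \<in> {1..n} \<and> j \<in> {1..d i}"
  "Xc i \<notin> coordsZ n d" "Mc t \<notin> coordsZ n d"
  by (auto simp: coordsZ_def)

lemma mem_coordsZM[simp]:
  "Zc i j \<in> coordsZM n m d \<longleftrightarrow> i \<in> {1..n} \<and> j \<in> {1..d i}"
  "Xc i \<notin> coordsZM n m d" "Mc t \<in> coordsZM n m d \<longleftrightarrow> t \<in> {1..m}"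
  by (auto simp: coordsZM_def)

lemma mem_coords[simp]:
  "Zc i j \<in> coords n m d \<longleftrightarrow> i \<in> {1..n} \<and> j \<in> {1..d i}"
  "Xc i \<in> coords n m d \<longleftrightarrow> i \<in> {1..n}" "Mc t \<in> coords n m d \<longleftrightarrow> t \<in> {1..m}"
  by (auto simp: coords_def)

lemma finite_coordsZ[simp]: "finite (coordsZ n d)"
proof -
  have "coordsZ n d \<subseteq> (\<lambda>(i,j). Zc i j) ` (SIGMA i:{1..n}. {1..d i})"
    by (auto simp: coordsZ_def)
  then show ?thesis by (rule finite_subset) auto
qed

lemma finite_coordsZM[simp]: "finite (coordsZM n m d)"
  unfolding coordsZM_def by auto

lemma finite_coords[simp]: "finite (coords n m d)"
  unfolding coords_def by auto

lemma coordsZM_sub: "coordsZM n m d \<subseteq> coords n m d"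
  by (auto simp: coords_def)

lemma supp_mono: "supp_in I v \<Longrightarrow> I \<subseteq> J \<Longrightarrow> supp_in J v"
  by (auto simp: supp_in_def)

lemma ell_cong: "(\<forall>j\<in>{1..d i}. v (Zc i j) = w (Zc i j)) \<Longrightarrow> ell d p f t i v = ell d p f t i w"
  unfolding ell_def by (intro arg_cong2[where f="(+)"] refl sum.cong) auto

lemma finite_G: "finite (G_set n m d p f \<phi>)"
proof -
  let ?G = "G_set n m d p f \<phi>"
  let ?r = "\<lambda>v::pt. restrict v (coordsZ n d)"
  have "inj_on ?r ?G"
  proof (rule inj_onI)
    fix v w assume v: "v \<in> ?G" and w: "w \<in> ?G" and e: "?r v = ?r w"
    have eZ: "v k = w k" if "k \<in> coordsZ n d" for k
      using fun_cong[OF e, of k] that by simp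
    show "v = w"
    proof
      fix k show "v k = w k"
      proof (cases k)
        case (Xc i) then show ?thesis using v w by (auto simp: G_set_def supp_in_def)
      next
        case (Zc i j)
        show ?thesis
        proof (cases "k \<in> coordsZ n d")
          case True with eZ show ?thesis by blast
        next
          case False then have "k \<notin> coordsZM n m d" using Zc by simp
          then show ?thesis using v w by (auto simp: G_set_def supp_in_def)
        qed
      next
        case (Mc t)
        show ?thesis
        proof (cases "t \<in> {1..m}")
          case True
          have "ell d p f t i v = ell d p f t i w" if "i \<in> {1..n}" for i
            by (rule ell_cong) (use eZ that in auto)
          then have "(\<lambda>i. if i \<in> {1..n} then ell d p f t i v else 0) =
                     (\<lambda>i. if i \<in> {1..n} then ell d p f t i w else 0)" by auto
          then show ?thesis using v w True Mc by (simp add: G_set_def)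
        next
          case False then show ?thesis using v w Mc by (auto simp: G_set_def supp_in_def)
        qed
      qed
    qed
  qed
  moreover have "?r ` ?G \<subseteq> PiE (coordsZ n d) (\<lambda>_. {0,1})"
    by (auto simp: G_set_def z_binary_def)
  moreover have "finite (PiE (coordsZ n d) (\<lambda>_. {0::real,1}))"
    by (rule finite_PiE) auto
  ultimately show ?thesis using finite_imageD finite_subset by blast
qed

lemma lin_sum: "lin I (sum g J) v = (\<Sum>j\<in>J. lin I (g j) v)"
proof -
  have "lin I (sum g J) v = (\<Sum>k\<in>I. \<Sum>j\<in>J. g j k * v k)"
    unfolding lin_def sum_fun_apply by (simp add: sum_distrib_right)
  also have "\<dots> = (\<Sum>j\<in>J. \<Sum>k\<in>I. g j k * v k)" by (rule sum.swap)
  finally show ?thesis by (simp add: lin_def)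
qed

lemma lin_scaleR[simp]: "lin I (r *\<^sub>R c) v = r * lin I c v"
  unfolding lin_def by (simp add: sum_distrib_left algebra_simps)

lemma lin_zmu: "lin I c (zmu_part v) = lin I (zmu_part c) v"
  unfolding lin_def zmu_part_def by (rule sum.cong) (auto split: idx.split)

lemma supp_zmu: "supp_in I v \<Longrightarrow> supp_in I (zmu_part v)"
  by (auto simp: supp_in_def zmu_part_def split: idx.split)

lemma G_supp: "v \<in> G_set n m d p f \<phi> \<Longrightarrow> supp_in (coords n m d) v"
  using supp_mono[OF _ coordsZM_sub] by (auto simp: G_set_def)

lemma poly_conv:
  "polyhedron_on (coords n m d) {v. supp_in (coords n m d) v \<and> zmu_part v \<in> convex hull (G_set n m d p f \<phi>)}"
proof -
  let ?I = "coords n m d"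
  have Gs: "\<forall>s\<in>G_set n m d p f \<phi>. supp_in ?I s" using G_supp by blast
  obtain F where fF: "finite F" and hF: "convex hull (G_set n m d p f \<phi>) =
      {v. supp_in ?I v \<and> (\<forall>(c,b)\<in>F. lin ?I c v \<le> b)}"
    using conv_poly[OF finite_coords finite_G Gs] by (elim exE conjE)
  define F' where "F' = (\<lambda>(c,b). (zmu_part c, b)) ` F"
  have fF': "finite F'" using fF by (simp add: F'_def)
  have iff: "(\<forall>(c,b)\<in>F'. lin ?I c v \<le> b) \<longleftrightarrow> (\<forall>(c,b)\<in>F. lin ?I c (zmu_part v) \<le> b)" for v
    unfolding F'_def lin_zmu by auto
  have "{v. supp_in ?I v \<and> zmu_part v \<in> convex hull (G_set n m d p f \<phi>)} =
     {v. supp_in ?I v \<and> (\<forall>(c,b)\<in>F'. lin ?I c v \<le> b)}"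
  proof (intro set_eqI)
    fix v
    show "v \<in> {v. supp_in ?I v \<and> zmu_part v \<in> convex hull (G_set n m d p f \<phi>)} \<longleftrightarrow>
      v \<in> {v. supp_in ?I v \<and> (\<forall>(c,b)\<in>F'. lin ?I c v \<le> b)}"
      unfolding iff mem_Collect_eq hF using supp_zmu[of ?I v] by blast
  qed
  then show ?thesis unfolding poly_alt using fF' by blast
qed

lemma poly_P:
  "polyhedron_on (coords n m d) {v. supp_in (coords n m d) v \<and> x_part v \<in> Pset n r A h}"
proof -
  let ?I = "coords n m d"
  define ca where "ca k = - (\<Sum>i\<in>{1..n}. A k i *\<^sub>R dlt (Xc i))" for k
  have lca: "lin ?I (ca k) v = - (\<Sum>i=1..n. A k i * x_part v i)" for k v
    unfolding ca_def lin_uminus lin_sum by (simp add: x_part_def)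
  have Rn: "x_part v \<in> Rn n" if "supp_in ?I v" for v
    using that by (auto simp: Rn_def x_part_def supp_in_def)
  have "{v. supp_in ?I v \<and> x_part v \<in> Pset n r A h} =
      {v. supp_in ?I v} \<inter> (\<Inter>k\<in>{..<r}. {v. supp_in ?I v \<and> lin ?I (ca k) v \<le> - h k})"
  proof (intro set_eqI)
    fix v
    have "supp_in ?I v \<Longrightarrow> x_part v \<in> Pset n r A h \<longleftrightarrow> (\<forall>k<r. lin ?I (ca k) v \<le> - h k)"
      unfolding lca Pset_def using Rn[of v] by auto
    then show "v \<in> {v. supp_in ?I v \<and> x_part v \<in> Pset n r A h} \<longleftrightarrow>
      v \<in> {v. supp_in ?I v} \<inter> (\<Inter>k\<in>{..<r}. {v. supp_in ?I v \<and> lin ?I (ca k) v \<le> - h k})"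
      by blast
  qed
  moreover have "polyhedron_on ?I ({v. supp_in ?I v} \<inter> (\<Inter>k\<in>{..<r}. {v. supp_in ?I v \<and> lin ?I (ca k) v \<le> - h k}))"
    by (rule poly_INT) (auto intro: poly_half)
  ultimately show ?thesis by (metis (no_types, lifting))
qed

lemma poly_B:
  assumes "i \<in> {1..n}" "d i \<ge> 1"
  shows "polyhedron_on (coords n m d) {v. supp_in (coords n m d) v \<and> in_B d p i v}"
proof -
  let ?I = "coords n m d"
  define cB where "cB = dlt (Xc i) - (\<Sum>j\<in>{1..d i}. (p i j - p i (j - 1)) *\<^sub>R dlt (Zc i j))"
  have lcB: "lin ?I cB v = v (Xc i) - (\<Sum>j=1..d i. (p i j - p i (j - 1)) * v (Zc i j))" for v
    unfolding cB_def lin_diff lin_sum using assms by simp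
  have l1: "lin ?I (dlt (Zc i 1)) v = v (Zc i 1)" for v using assms by simp
  have l2: "lin ?I (dlt (Zc i (Suc j)) - dlt (Zc i j)) v = v (Zc i (Suc j)) - v (Zc i j)"
    if "j \<in> {1..<d i}" for v j using assms that by simp
  have l3: "lin ?I (dlt (Zc i (d i))) v = v (Zc i (d i))" for v using assms by simp
  define Mon where "Mon = ({v. supp_in ?I v} \<inter> (\<Inter>j\<in>{1..<d i}. {v. supp_in ?I v \<and> lin ?I (dlt (Zc i (Suc j)) - dlt (Zc i j)) v \<le> 0}))"
  have mon: "v \<in> Mon \<longleftrightarrow> supp_in ?I v \<and> (\<forall>j. 1 \<le> j \<and> j < d i \<longrightarrow> v (Zc i (Suc j)) \<le> v (Zc i j))" for v
    unfolding Mon_def using l2 by auto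
  have eq: "{v. supp_in ?I v \<and> in_B d p i v} =
      {v. supp_in ?I v \<and> lin ?I cB v \<le> p i 0} \<inter> {v. supp_in ?I v \<and> lin ?I (- cB) v \<le> - p i 0}
      \<inter> {v. supp_in ?I v \<and> lin ?I (dlt (Zc i 1)) v \<le> 1}
      \<inter> Mon \<inter> {v. supp_in ?I v \<and> lin ?I (- dlt (Zc i (d i))) v \<le> 0}"
  proof (intro set_eqI)
    fix v
    show "v \<in> {v. supp_in ?I v \<and> in_B d p i v} \<longleftrightarrow> v \<in> {v. supp_in ?I v \<and> lin ?I cB v \<le> p i 0} \<inter> {v. supp_in ?I v \<and> lin ?I (- cB) v \<le> - p i 0}
      \<inter> {v. supp_in ?I v \<and> lin ?I (dlt (Zc i 1)) v \<le> 1}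
      \<inter> Mon \<inter> {v. supp_in ?I v \<and> lin ?I (- dlt (Zc i (d i))) v \<le> 0}"
      unfolding Int_iff mon mem_Collect_eq lin_uminus lcB l1 l3 in_B_def in_Delta_i_def
      by auto
  qed
  have pM: "polyhedron_on ?I Mon" unfolding Mon_def by (rule poly_INT) (simp_all only: poly_half finite_atLeastLessThan)
  show ?thesis unfolding eq
    by (intro poly_Int[OF _ poly_half] poly_Int[OF _ pM] poly_Int[OF _ poly_half] poly_Int[OF poly_half poly_half])
qed

lemma poly_Q:
  assumes "\<forall>i\<in>{1..n}. d i \<ge> 1"
  shows "polyhedron_on (coords n m d) (Q_set n m d p (Pset n r A h) f \<phi>)"
proof -
  let ?I = "coords n m d"
  have eq: "Q_set n m d p (Pset n r A h) f \<phi> =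
     {v. supp_in ?I v \<and> zmu_part v \<in> convex hull (G_set n m d p f \<phi>)} \<inter>
     {v. supp_in ?I v \<and> x_part v \<in> Pset n r A h} \<inter>
     ({v. supp_in ?I v} \<inter> (\<Inter>i\<in>{1..n}. {v. supp_in ?I v \<and> in_B d p i v}))"
    unfolding Q_set_def by blast
  have pB: "polyhedron_on ?I ({v. supp_in ?I v} \<inter> (\<Inter>i\<in>{1..n}. {v. supp_in ?I v \<and> in_B d p i v}))"
    by (rule poly_INT) (use assms poly_B in auto)
  show ?thesis unfolding eq
    by (rule poly_Int[OF poly_Int[OF poly_conv poly_P] pB])
qed


lemma staircase:
  fixes z :: "nat \<Rightarrow> real"
  assumes "\<forall>j\<in>{1..D}. z j \<in> {0,1}" "\<forall>j. 1 \<le> j \<and> j < D \<longrightarrow> z (Suc j) \<le> z j"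
  shows "\<exists>k\<le>D. \<forall>j\<in>{1..D}. z j = (if j \<le> k then 1 else 0)"
  using assms
proof (induction D)
  case 0 then show ?case by auto
next
  case (Suc D)
  have "\<forall>j\<in>{1..D}. z j \<in> {0,1}" "\<forall>j. 1 \<le> j \<and> j < D \<longrightarrow> z (Suc j) \<le> z j"
    using Suc.prems by auto
  then obtain k where k: "k \<le> D" "\<forall>j\<in>{1..D}. z j = (if j \<le> k then 1 else 0)"
    using Suc.IH by blast
  have zS: "z (Suc D) \<in> {0,1}" using Suc.prems by auto
  show ?case
  proof (cases "z (Suc D) = 0")
    case True
    then show ?thesis using k by (intro exI[of _ k]) (auto simp: le_Suc_eq)
  next
    case False
    then have z1: "z (Suc D) = 1" using zS by auto
    have kD: "k = D"
    proof (cases "D = 0")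
      case True then show ?thesis using k by simp
    next
      case False
      then have "z (Suc D) \<le> z D" using Suc.prems by auto
      then have "z D = 1" using z1 k(2) False by (auto split: if_splits)
      then have "D \<le> k" using k(2) False by (auto split: if_splits)
      then show ?thesis using k by simp
    qed
    show ?thesis using k kD z1 by (intro exI[of _ "Suc D"]) (auto simp: le_Suc_eq)
  qed
qed

lemma tele_sum: "(\<Sum>j=1..k. g j - g (j - 1)) = g k - (g 0 :: real)" for k :: nat
  by (induction k) auto

lemma tele:
  fixes g :: "nat \<Rightarrow> real"
  assumes "k \<le> D"
  shows "g 0 + (\<Sum>j=1..D. (g j - g (j - 1)) * (if j \<le> k then 1 else 0)) = g k"
proof -
  have "(\<Sum>j=1..D. (g j - g (j - 1)) * (if j \<le> k then 1 else 0)) =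
        (\<Sum>j=1..D. if j \<le> k then g j - g (j - 1) else 0)"
    by (rule sum.cong) auto
  also have "\<dots> = (\<Sum>j\<in>{j\<in>{1..D}. j \<le> k}. g j - g (j - 1))"
    by (rule sum.inter_filter[symmetric]) simp
  also have "{j\<in>{1..D}. j \<le> k} = {1..k}" using assms by auto
  finally show ?thesis using tele_sum[of g k] by simp
qed

lemma stair_val:
  assumes "in_Delta_i d i v" "\<forall>j\<in>{1..d i}. v (Zc i j) \<in> {0,1}"
  shows "\<exists>k\<in>{0..d i}. \<forall>g. g 0 + (\<Sum>j=1..d i. (g j - g (j - 1)) * v (Zc i j)) = (g k :: real)"
proof -
  have "\<forall>j. 1 \<le> j \<and> j < d i \<longrightarrow> v (Zc i (Suc j)) \<le> v (Zc i j)"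
    using assms(1) by (simp add: in_Delta_i_def)
  then obtain k where k: "k \<le> d i" "\<forall>j\<in>{1..d i}. v (Zc i j) = (if j \<le> k then 1 else 0)"
    using staircase[of "d i" "\<lambda>j. v (Zc i j)"] assms(2) by blast
  have "g 0 + (\<Sum>j=1..d i. (g j - g (j - 1)) * v (Zc i j)) = (g k :: real)" for g
  proof -
    have "(\<Sum>j=1..d i. (g j - g (j - 1)) * v (Zc i j)) =
          (\<Sum>j=1..d i. (g j - g (j - 1)) * (if j \<le> k then 1 else 0))"
      by (rule sum.cong) (use k in auto)
    then show ?thesis using tele[OF k(1), of g] by simp
  qed
  then show ?thesis using k by auto
qed

lemma mu_det:
  assumes y: "y \<in> convex hull (G_set n m d p f \<phi>)" and yb: "\<forall>k\<in>coordsZ n d. y k \<in> {0,1}"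
    and t: "t \<in> {1..m}"
  shows "y (Mc t) = \<phi> t (\<lambda>i. if i \<in> {1..n} then ell d p f t i y else 0)"
proof -
  let ?G = "G_set n m d p f \<phi>"
  obtain u where u0: "\<forall>g\<in>?G. 0 \<le> u g" and u1: "sum u ?G = 1" and uy: "(\<Sum>g\<in>?G. u g *\<^sub>R g) = y"
  proof -
    have "\<exists>u. (\<forall>g\<in>?G. 0 \<le> u g) \<and> sum u ?G = 1 \<and> (\<Sum>g\<in>?G. u g *\<^sub>R g) = y"
      using y unfolding convex_hull_finite[OF finite_G] by (simp only: mem_Collect_eq)
    then show ?thesis using that by blast
  qed
  have yk: "y k = (\<Sum>g\<in>?G. u g * g k)" for k
    using fun_cong[OF uy, of k] by (simp add: sum_fun_apply)
  have gb: "g k \<in> {0,1}" if "g \<in> ?G" "k \<in> coordsZ n d" for g k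
    using that by (auto simp: G_set_def z_binary_def)
  have agree: "g k = y k" if g: "g \<in> ?G" and ug: "u g > 0" and k: "k \<in> coordsZ n d" for g k
  proof (cases "y k = 0")
    case True
    have "(\<Sum>g\<in>?G. u g * g k) = 0" using True yk by simp
    moreover have "\<forall>g\<in>?G. 0 \<le> u g * g k"
    proof
      fix g assume "g \<in> ?G" then have "0 \<le> u g" "0 \<le> g k" using u0 gb[of g k] k by auto
      then show "0 \<le> u g * g k" by simp
    qed
    ultimately have "\<forall>g\<in>?G. u g * g k = 0"
      by (intro sum_nonneg_eq_0_iff[OF finite_G, THEN iffD1]) auto
    then show ?thesis using g ug True by auto
  next
    case False
    then have y1: "y k = 1" using yb k by auto
    have "(\<Sum>g\<in>?G. u g * (1 - g k)) = (\<Sum>g\<in>?G. u g) - (\<Sum>g\<in>?G. u g * g k)"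
      by (simp add: algebra_simps sum_subtractf)
    also have "\<dots> = 0" using u1 yk y1 by simp
    finally have "(\<Sum>g\<in>?G. u g * (1 - g k)) = 0" .
    moreover have "\<forall>g\<in>?G. 0 \<le> u g * (1 - g k)"
    proof
      fix g assume "g \<in> ?G" then have "0 \<le> u g" "0 \<le> 1 - g k" using u0 gb[of g k] k by auto
      then show "0 \<le> u g * (1 - g k)" by simp
    qed
    ultimately have "\<forall>g\<in>?G. u g * (1 - g k) = 0"
      by (intro sum_nonneg_eq_0_iff[OF finite_G, THEN iffD1]) auto
    then show ?thesis using g ug y1 by auto
  qed
  define C where "C = \<phi> t (\<lambda>i. if i \<in> {1..n} then ell d p f t i y else 0)"
  have uC: "u g * g (Mc t) = u g * C" if g: "g \<in> ?G" for g
  proof (cases "u g = 0")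
    case True then show ?thesis by simp
  next
    case False
    then have ug: "u g > 0" using u0 g by force
    have "ell d p f t i g = ell d p f t i y" if "i \<in> {1..n}" for i
      by (rule ell_cong) (use agree[OF g ug] that in auto)
    then have "(\<lambda>i. if i \<in> {1..n} then ell d p f t i g else 0) =
               (\<lambda>i. if i \<in> {1..n} then ell d p f t i y else 0)" by auto
    then have "g (Mc t) = C" using g t by (simp add: G_set_def C_def)
    then show ?thesis by simp
  qed
  have "y (Mc t) = (\<Sum>g\<in>?G. u g * g (Mc t))" by (rule yk)
  also have "\<dots> = (\<Sum>g\<in>?G. u g * C)" by (rule sum.cong) (simp_all add: uC)
  also have "\<dots> = C" using u1 by (simp add: sum_distrib_right[symmetric])
  finally show ?thesis by (simp add: C_def)
qed


lemma zmu_Z[simp]: "zmu_part v (Zc i j) = v (Zc i j)" "zmu_part v (Mc t) = v (Mc t)"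
  "zmu_part v (Xc i) = 0"
  by (simp_all add: zmu_part_def)

lemma ell_tele: "ell d p f t i v = f t i (p i 0) + (\<Sum>j=1..d i. (f t i (p i j) - f t i (p i (j - 1))) * v (Zc i j))"
  by (simp add: ell_def)

lemma graph_sub:
  assumes v: "v \<in> Q_set n m d p P f \<phi>" and vb: "\<forall>k\<in>coordsZ n d. v k \<in> {0,1}"
  shows "(x_part v, mu_part v) \<in> graph_set n m d p P f \<phi>"
proof -
  have supp: "supp_in (coords n m d) v" and conv: "zmu_part v \<in> convex hull (G_set n m d p f \<phi>)"
    and xP: "x_part v \<in> P" and B: "\<forall>i\<in>{1..n}. in_B d p i v"
    using v by (auto simp: Q_set_def)
  have yb: "\<forall>k\<in>coordsZ n d. zmu_part v k \<in> {0,1}"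
  proof
    fix k assume k: "k \<in> coordsZ n d"
    then show "zmu_part v k \<in> {0,1}" using vb by (cases k) auto
  qed
  have st: "\<exists>k\<in>{0..d i}. \<forall>g. g 0 + (\<Sum>j=1..d i. (g j - g (j - 1)) * v (Zc i j)) = (g k :: real)"
    if i: "i \<in> {1..n}" for i
    using B i vb by (intro stair_val) (auto simp: in_B_def)
  have xi: "x_part v i = p i 0 + (\<Sum>j=1..d i. (p i j - p i (j - 1)) * v (Zc i j))" if "i \<in> {1..n}" for i
    using B that by (simp add: in_B_def x_part_def)
  have grid: "x_part v i \<in> p i ` {0..d i}" if i: "i \<in> {1..n}" for i
  proof -
    obtain k where k: "k \<in> {0..d i}" and kk: "\<forall>g. g 0 + (\<Sum>j=1..d i. (g j - g (j - 1)) * v (Zc i j)) = (g k :: real)"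
      using st[OF i] by blast
    have "x_part v i = p i k" using xi[OF i] kk[rule_format, of "p i"] by simp
    then show ?thesis using k by blast
  qed
  have fe: "f t i (x_part v i) = ell d p f t i (zmu_part v)" if i: "i \<in> {1..n}" for t i
  proof -
    obtain k where k: "k \<in> {0..d i}" and kk: "\<forall>g. g 0 + (\<Sum>j=1..d i. (g j - g (j - 1)) * v (Zc i j)) = (g k :: real)"
      using st[OF i] by blast
    have "x_part v i = p i k" using xi[OF i] kk[rule_format, of "p i"] by simp
    moreover have "ell d p f t i (zmu_part v) = f t i (p i k)"
      using kk[rule_format, of "\<lambda>j. f t i (p i j)"] by (simp add: ell_tele)
    ultimately show ?thesis by simp
  qed
  have Rnx: "x_part v \<in> Rn n" using supp by (auto simp: Rn_def x_part_def supp_in_def)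
  have Rnm: "mu_part v \<in> Rn m" using supp by (auto simp: Rn_def mu_part_def supp_in_def)
  have mu: "mu_part v t = \<phi> t (\<lambda>i. if i \<in> {1..n} then f t i (x_part v i) else 0)" if t: "t \<in> {1..m}" for t
  proof -
    have "mu_part v t = zmu_part v (Mc t)" by (simp add: mu_part_def)
    also have "\<dots> = \<phi> t (\<lambda>i. if i \<in> {1..n} then ell d p f t i (zmu_part v) else 0)"
      by (rule mu_det[OF conv yb t])
    also have "(\<lambda>i. if i \<in> {1..n} then ell d p f t i (zmu_part v) else 0) =
               (\<lambda>i. if i \<in> {1..n} then f t i (x_part v i) else 0)" using fe by auto
    finally show ?thesis .
  qed
  have "x_part v \<in> P \<inter> Xgrid n d p" unfolding Xgrid_def using xP Rnx grid by blast
  then show ?thesis unfolding graph_set_def using Rnm mu by blast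
qed

lemma graph_sup:
  assumes g: "(x, \<mu>) \<in> graph_set n m d p P f \<phi>"
  shows "(x, \<mu>) \<in> (\<lambda>v. (x_part v, mu_part v)) ` {v \<in> Q_set n m d p P f \<phi>. \<forall>k\<in>coordsZ n d. v k \<in> {0,1}}"
proof -
  have xP: "x \<in> P" and xR: "x \<in> Rn n" and xg: "\<forall>i\<in>{1..n}. x i \<in> p i ` {0..d i}"
    and muR: "\<mu> \<in> Rn m"
    and mu: "\<forall>t\<in>{1..m}. \<mu> t = \<phi> t (\<lambda>i. if i \<in> {1..n} then f t i (x i) else 0)"
    using g by (auto simp: graph_set_def Xgrid_def)
  have "\<forall>i\<in>{1..n}. \<exists>k\<in>{0..d i}. x i = p i k" using xg by blast
  then obtain K where K: "\<And>i. i \<in> {1..n} \<Longrightarrow> K i \<in> {0..d i} \<and> x i = p i (K i)"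
    by metis
  define v where "v = (\<lambda>\<kappa>. case \<kappa> of Xc i \<Rightarrow> x i
       | Zc i j \<Rightarrow> (if i \<in> {1..n} \<and> 1 \<le> j \<and> j \<le> K i then 1 else 0 :: real)
       | Mc t \<Rightarrow> \<mu> t)"
  have vZ: "v (Zc i j) = (if i \<in> {1..n} \<and> 1 \<le> j \<and> j \<le> K i then 1 else 0)" for i j
    by (simp add: v_def)
  have tl: "g 0 + (\<Sum>j=1..d i. (g j - g (j - 1)) * v (Zc i j)) = (g (K i) :: real)"
    if i: "i \<in> {1..n}" for g i
  proof -
    have "(\<Sum>j=1..d i. (g j - g (j - 1)) * v (Zc i j)) =
          (\<Sum>j=1..d i. (g j - g (j - 1)) * (if j \<le> K i then 1 else 0))"
      by (rule sum.cong) (use i in \<open>auto simp: vZ\<close>)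
    then show ?thesis using tele[of "K i" "d i" g] K[OF i] by simp
  qed
  have supp: "supp_in (coords n m d) v"
    unfolding supp_in_def
  proof (intro allI impI)
    fix k assume k: "k \<notin> coords n m d"
    show "v k = 0"
    proof (cases k)
      case (Xc i) then show ?thesis using k xR by (auto simp: v_def Rn_def)
    next
      case (Zc i j) then show ?thesis using k K by (fastforce simp: v_def)
    next
      case (Mc t) then show ?thesis using k muR by (auto simp: v_def Rn_def)
    qed
  qed
  have delta: "in_Delta_i d i v" if "i \<in> {1..n}" for i
    unfolding in_Delta_i_def vZ by auto
  have ellv: "ell d p f t i (zmu_part v) = f t i (x i)" if i: "i \<in> {1..n}" for t i
    using tl[OF i, of "\<lambda>j. f t i (p i j)"] K[OF i] by (simp add: ell_tele)
  have zG: "zmu_part v \<in> G_set n m d p f \<phi>"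
    unfolding G_set_def mem_Collect_eq
  proof (intro conjI ballI)
    show "supp_in (coordsZM n m d) (zmu_part v)"
      unfolding supp_in_def
    proof (intro allI impI)
      fix k assume k: "k \<notin> coordsZM n m d"
      have "k \<notin> coords n m d \<or> (\<exists>i. k = Xc i)" using k by (cases k) auto
      then show "zmu_part v k = 0" using supp by (auto simp: supp_in_def zmu_part_def split: idx.split)
    qed
    show "in_Delta n d (zmu_part v)" using delta by (simp add: in_Delta_def in_Delta_i_def)
    show "z_binary n d (zmu_part v)"
      unfolding z_binary_def
    proof
      fix k assume "k \<in> coordsZ n d"
      then show "zmu_part v k \<in> {0,1}" by (cases k) (auto simp: vZ)
    qed
    fix t assume t: "t \<in> {1..m}"
    have "(\<lambda>i. if i \<in> {1..n} then ell d p f t i (zmu_part v) else 0) =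
          (\<lambda>i. if i \<in> {1..n} then f t i (x i) else 0)" using ellv by auto
    then show "zmu_part v (Mc t) = \<phi> t (\<lambda>i. if i \<in> {1..n} then ell d p f t i (zmu_part v) else 0)"
      using mu t by (simp add: v_def)
  qed
  have xv: "x_part v = x" by (simp add: x_part_def v_def)
  have muv: "mu_part v = \<mu>" by (simp add: mu_part_def v_def)
  have B: "in_B d p i v" if i: "i \<in> {1..n}" for i
    using tl[OF i, of "p i"] K[OF i] delta[OF i] by (simp add: in_B_def v_def)
  have "v \<in> Q_set n m d p P f \<phi>"
    unfolding Q_set_def using supp zG hull_inc[OF zG] xP xv B by auto
  moreover have "\<forall>k\<in>coordsZ n d. v k \<in> {0,1}"
  proof
    fix k assume "k \<in> coordsZ n d"
    then show "v k \<in> {0,1}" by (cases k) (auto simp: vZ)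
  qed
  ultimately have "v \<in> {v \<in> Q_set n m d p P f \<phi>. \<forall>k\<in>coordsZ n d. v k \<in> {0,1}}" by blast
  moreover have "(x, \<mu>) = (x_part v, mu_part v)" using xv muv by simp
  ultimately show ?thesis unfolding image_iff by (intro bexI[of _ v]) simp_all
qed

lemma graph_eq:
  "(\<lambda>v. (x_part v, mu_part v)) ` {v \<in> Q_set n m d p P f \<phi>. \<forall>k\<in>coordsZ n d. v k \<in> {0,1}}
    = graph_set n m d p P f \<phi>"
proof
  show "(\<lambda>v. (x_part v, mu_part v)) ` {v \<in> Q_set n m d p P f \<phi>. \<forall>k\<in>coordsZ n d. v k \<in> {0,1}}
    \<subseteq> graph_set n m d p P f \<phi>"
  proof
    fix z assume "z \<in> (\<lambda>v. (x_part v, mu_part v)) ` {v \<in> Q_set n m d p P f \<phi>. \<forall>k\<in>coordsZ n d. v k \<in> {0,1}}"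
    then obtain v where "v \<in> Q_set n m d p P f \<phi>" "\<forall>k\<in>coordsZ n d. v k \<in> {0,1}" "z = (x_part v, mu_part v)"
      by blast
    then show "z \<in> graph_set n m d p P f \<phi>" using graph_sub by simp
  qed
  show "graph_set n m d p P f \<phi> \<subseteq>
    (\<lambda>v. (x_part v, mu_part v)) ` {v \<in> Q_set n m d p P f \<phi>. \<forall>k\<in>coordsZ n d. v k \<in> {0,1}}"
  proof
    fix z assume "z \<in> graph_set n m d p P f \<phi>"
    moreover obtain x \<mu> where "z = (x, \<mu>)" by (cases z)
    ultimately show "z \<in> (\<lambda>v. (x_part v, mu_part v)) ` {v \<in> Q_set n m d p P f \<phi>. \<forall>k\<in>coordsZ n d. v k \<in> {0,1}}"
      using graph_sup by simp
  qed
qed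


definition lift :: "nat \<Rightarrow> (nat \<Rightarrow> nat) \<Rightarrow> (nat \<Rightarrow> nat \<Rightarrow> real) \<Rightarrow> pt \<Rightarrow> pt" where
  "lift n d p z = (\<lambda>\<kappa>. case \<kappa> of Xc i \<Rightarrow> (if i \<in> {1..n} then p i 0 + (\<Sum>j=1..d i. (p i j - p i (j - 1)) * z (Zc i j)) else 0)
     | Zc i j \<Rightarrow> z (Zc i j) | Mc t \<Rightarrow> z (Mc t))"

lemma convC: "convex {z::pt. supp_in (coordsZM n m d) z \<and> in_Delta n d z}"
  unfolding convex_def
proof (intro ballI allI impI)
  fix x y :: pt and u v :: real
  assume x: "x \<in> {z::pt. supp_in (coordsZM n m d) z \<and> in_Delta n d z}"
    and y: "y \<in> {z::pt. supp_in (coordsZM n m d) z \<and> in_Delta n d z}"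
    and uv: "0 \<le> u" "0 \<le> v" "u + v = 1"
  have s: "supp_in (coordsZM n m d) (u *\<^sub>R x + v *\<^sub>R y)" using x y by (simp add: supp_in_def)
  have "in_Delta_i d i (u *\<^sub>R x + v *\<^sub>R y)" if i: "i \<in> {1..n}" for i
  proof -
    have dx: "in_Delta_i d i x" and dy: "in_Delta_i d i y" using x y i by (auto simp: in_Delta_def)
    have 1: "u * x (Zc i 1) + v * y (Zc i 1) \<le> 1"
      using dx dy uv by (intro convex_bound_le) (auto simp: in_Delta_i_def)
    have 2: "u * x (Zc i (Suc j)) + v * y (Zc i (Suc j)) \<le> u * x (Zc i j) + v * y (Zc i j)"
      if "1 \<le> j \<and> j < d i" for j
      using dx dy uv that by (intro add_mono mult_left_mono) (auto simp: in_Delta_i_def)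
    have 3: "0 \<le> u * x (Zc i (d i)) + v * y (Zc i (d i))"
      using dx dy uv by (intro add_nonneg_nonneg mult_nonneg_nonneg) (auto simp: in_Delta_i_def)
    show ?thesis unfolding in_Delta_i_def using 1 2 3 by simp
  qed
  then show "u *\<^sub>R x + v *\<^sub>R y \<in> {z::pt. supp_in (coordsZM n m d) z \<and> in_Delta n d z}"
    using s by (simp add: in_Delta_def)
qed

lemma hullC: "convex hull (G_set n m d p f \<phi>) \<subseteq> {z::pt. supp_in (coordsZM n m d) z \<and> in_Delta n d z}"
  by (rule hull_minimal) (auto simp: G_set_def convC)

lemma zmu_lift: "supp_in (coordsZM n m d) z \<Longrightarrow> zmu_part (lift n d p z) = z"
  by (rule ext) (auto simp: zmu_part_def lift_def supp_in_def split: idx.split)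

lemma lift_Q:
  assumes z: "z \<in> convex hull (G_set n m d p f \<phi>)"
  shows "lift n d p z \<in> Q_set n m d p (Rn n) f \<phi>"
proof -
  have "z \<in> {z::pt. supp_in (coordsZM n m d) z \<and> in_Delta n d z}" using hullC[of n m d p f \<phi>] z by blast
  then have zs: "supp_in (coordsZM n m d) z" and zd: "in_Delta n d z" by simp_all
  have "supp_in (coords n m d) (lift n d p z)"
    unfolding supp_in_def
  proof (intro allI impI)
    fix k assume k: "k \<notin> coords n m d"
    then have "k \<notin> coordsZM n m d" using coordsZM_sub by blast
    then show "lift n d p z k = 0" using k zs by (cases k) (auto simp: lift_def supp_in_def)
  qed
  moreover have "zmu_part (lift n d p z) \<in> convex hull (G_set n m d p f \<phi>)" using zmu_lift[OF zs] z by simp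
  moreover have "x_part (lift n d p z) \<in> Rn n" by (auto simp: x_part_def Rn_def lift_def)
  moreover have "in_B d p i (lift n d p z)" if "i \<in> {1..n}" for i
    using zd that by (auto simp: in_B_def lift_def in_Delta_def in_Delta_i_def)
  ultimately show ?thesis by (simp add: Q_set_def)
qed

lemma lift_zmu:
  assumes v: "v \<in> Q_set n m d p (Rn n) f \<phi>"
  shows "lift n d p (zmu_part v) = v"
proof
  fix k
  have s: "supp_in (coords n m d) v" and B: "\<forall>i\<in>{1..n}. in_B d p i v" using v by (auto simp: Q_set_def)
  show "lift n d p (zmu_part v) k = v k"
  proof (cases k)
    case (Xc i)
    show ?thesis
    proof (cases "i \<in> {1..n}")
      case True then show ?thesis using B Xc by (simp add: lift_def in_B_def)
    next
      case False
      then have "v (Xc i) = 0" using s by (simp add: supp_in_def)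
      then show ?thesis using False Xc by (auto simp: lift_def)
    qed
  qed (simp_all add: lift_def)
qed

lemma lift_aff: "lift n d p ((1 - u) *\<^sub>R a + u *\<^sub>R b) = (1 - u) *\<^sub>R lift n d p a + u *\<^sub>R lift n d p b"
proof
  fix k
  show "lift n d p ((1 - u) *\<^sub>R a + u *\<^sub>R b) k = ((1 - u) *\<^sub>R lift n d p a + u *\<^sub>R lift n d p b) k"
  proof (cases k)
    case (Xc i)
    show ?thesis
    proof (cases "i \<in> {1..n}")
      case True
      define A where "A = (\<Sum>j=1..d i. (p i j - p i (j - 1)) * a (Zc i j))"
      define B where "B = (\<Sum>j=1..d i. (p i j - p i (j - 1)) * b (Zc i j))"
      have S: "(\<Sum>j=1..d i. (p i j - p i (j - 1)) * ((1 - u) * a (Zc i j) + u * b (Zc i j))) =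
            (1 - u) * A + u * B"
        unfolding A_def B_def by (simp add: sum_distrib_left sum.distrib[symmetric] algebra_simps)
      have "lift n d p ((1 - u) *\<^sub>R a + u *\<^sub>R b) k =
          p i 0 + (\<Sum>j=1..d i. (p i j - p i (j - 1)) * ((1 - u) * a (Zc i j) + u * b (Zc i j)))"
        using True Xc by (simp add: lift_def)
      also have "\<dots> = (1 - u) * (p i 0 + A) + u * (p i 0 + B)" unfolding S by (simp add: algebra_simps)
      also have "\<dots> = ((1 - u) *\<^sub>R lift n d p a + u *\<^sub>R lift n d p b) k"
        using True Xc by (simp add: lift_def A_def B_def)
      finally show ?thesis .
    next
      case False then show ?thesis using Xc by (auto simp: lift_def)
    qed
  qed (simp_all add: lift_def)
qed

lemma ideal_ext:
  assumes ext: "v extreme_point_of Q_set n m d p (Rn n) f \<phi>" and k: "k \<in> coordsZ n d"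
  shows "v k \<in> {0,1}"
proof -
  let ?Q = "Q_set n m d p (Rn n) f \<phi>"
  let ?C = "convex hull (G_set n m d p f \<phi>)"
  have vQ: "v \<in> ?Q" and noseg: "\<forall>a\<in>?Q. \<forall>b\<in>?Q. v \<notin> open_segment a b"
    using ext by (auto simp: extreme_point_of_def)
  define y where "y = zmu_part v"
  have yC: "y \<in> ?C" using vQ by (simp add: Q_set_def y_def)
  have vy: "v = lift n d p y" using lift_zmu[OF vQ] by (simp add: y_def)
  have "y extreme_point_of ?C"
    unfolding extreme_point_of_def
  proof (intro conjI ballI)
    show "y \<in> ?C" by (rule yC)
    fix a b assume a: "a \<in> ?C" and b: "b \<in> ?C"
    show "y \<notin> open_segment a b"
    proof
      assume "y \<in> open_segment a b"
      then obtain u where u: "0 \<le> u" "u \<le> 1" and yab: "y = (1 - u) *\<^sub>R a + u *\<^sub>R b"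
        and ya: "y \<noteq> a" and yb: "y \<noteq> b"
        by (auto simp: open_segment_def closed_segment_def)
      have "a \<in> {z::pt. supp_in (coordsZM n m d) z \<and> in_Delta n d z}" "b \<in> {z::pt. supp_in (coordsZM n m d) z \<and> in_Delta n d z}"
        using hullC[of n m d p f \<phi>] a b by blast+
      then have as: "supp_in (coordsZM n m d) a" and bs: "supp_in (coordsZM n m d) b" by simp_all
      have "v = (1 - u) *\<^sub>R lift n d p a + u *\<^sub>R lift n d p b" using vy yab lift_aff by simp
      moreover have "v \<noteq> lift n d p a"
      proof
        assume "v = lift n d p a"
        then have "y = a" using zmu_lift[OF as] by (simp add: y_def)
        then show False using ya by simp
      qed
      moreover have "v \<noteq> lift n d p b"
      proof
        assume "v = lift n d p b"
        then have "y = b" using zmu_lift[OF bs] by (simp add: y_def)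
        then show False using yb by simp
      qed
      ultimately have "v \<in> open_segment (lift n d p a) (lift n d p b)"
        using u by (auto simp: open_segment_def closed_segment_def)
      then show False using noseg lift_Q[OF a] lift_Q[OF b] by blast
    qed
  qed
  then have "y \<in> G_set n m d p f \<phi>" by (rule extreme_point_of_convex_hull)
  then have "y k \<in> {0,1}" using k by (auto simp: G_set_def z_binary_def)
  moreover have "y k = v k" using k by (cases k) (auto simp: y_def)
  ultimately show ?thesis by simp
qed


theorem lemma1:
  fixes n m r :: nat and d :: "nat \<Rightarrow> nat" and p :: "nat \<Rightarrow> nat \<Rightarrow> real"
    and A :: "nat \<Rightarrow> nat \<Rightarrow> real" and h :: "nat \<Rightarrow> real"
    and f :: "nat \<Rightarrow> nat \<Rightarrow> real \<Rightarrow> real" and L U :: "nat \<Rightarrow> nat \<Rightarrow> real"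
    and \<phi> :: "nat \<Rightarrow> (nat \<Rightarrow> real) \<Rightarrow> real"
  assumes "n \<ge> 1" and "m \<ge> 1"
    and "\<forall>i\<in>{1..n}. d i \<ge> 1"
    and "\<forall>i\<in>{1..n}. \<forall>j<d i. p i j < p i (Suc j)"
    and "\<exists>B. \<forall>x\<in>Pset n r A h. \<forall>i\<in>{1..n}. \<bar>x i\<bar> \<le> B"
    and "\<forall>t\<in>{1..m}. \<forall>i\<in>{1..n}. \<forall>j\<in>{0..d i}. L t i \<le> f t i (p i j) \<and> f t i (p i j) \<le> U t i"
  shows "mip_formulation (coords n m d) (coordsZ n d) (\<lambda>v. (x_part v, mu_part v))
           (Q_set n m d p (Pset n r A h) f \<phi>) (graph_set n m d p (Pset n r A h) f \<phi>)
         \<and> ideal_formulation (coords n m d) (coordsZ n d) (\<lambda>v. (x_part v, mu_part v))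
           (Q_set n m d p (Rn n) f \<phi>) (graph_set n m d p (Rn n) f \<phi>)"
proof -
  have d1: "\<forall>i\<in>{1..n}. d i \<ge> 1" by (rule assms(3))
  have m1: "mip_formulation (coords n m d) (coordsZ n d) (\<lambda>v. (x_part v, mu_part v))
           (Q_set n m d p (Pset n r A h) f \<phi>) (graph_set n m d p (Pset n r A h) f \<phi>)"
    unfolding mip_formulation_def by (intro conjI poly_Q[OF d1] graph_eq)
  have PR: "Pset n 0 A h = Rn n" by (auto simp: Pset_def)
  have "polyhedron_on (coords n m d) (Q_set n m d p (Pset n 0 A h) f \<phi>)" by (rule poly_Q[OF d1])
  then have pR: "polyhedron_on (coords n m d) (Q_set n m d p (Rn n) f \<phi>)" by (simp only: PR)
  have m2: "mip_formulation (coords n m d) (coordsZ n d) (\<lambda>v. (x_part v, mu_part v))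
           (Q_set n m d p (Rn n) f \<phi>) (graph_set n m d p (Rn n) f \<phi>)"
    unfolding mip_formulation_def by (intro conjI pR graph_eq)
  have "ideal_formulation (coords n m d) (coordsZ n d) (\<lambda>v. (x_part v, mu_part v))
           (Q_set n m d p (Rn n) f \<phi>) (graph_set n m d p (Rn n) f \<phi>)"
    unfolding ideal_formulation_def
  proof (intro conjI m2 allI impI ballI)
    fix v k assume "v extreme_point_of Q_set n m d p (Rn n) f \<phi>" "k \<in> coordsZ n d"
    then show "v k \<in> {0,1}" by (rule ideal_ext)
  qed
  with m1 show ?thesis by (rule conjI)
qed

end
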